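(* Let $N\ge K\ge1$, $\mathbf{H}\in\mathbb{R}^{N\times K}$ full column rank, with orthonormal eigenvectors $\mathbf{u}_1,\ldots,\mathbf{u}_N$ of $\mathbf{H}\mathbf{H}^T$, $\mathbf{H}\mathbf{H}^T\mathbf{u}_i=\rho_i^2\mathbf{u}_i$, $\rho_1^2\ge\cdots\ge\rho_N^2\ge0$, $\rho_1^2>\rho_N^2$. Fix positive integers $M_1,M_2,N_b$, $\sigma_x^2,\sigma_0^2>0$ and $P_{FA}\in(0,1)$, and let $\gamma=\mathbb{Q}_{F(N_b,N_b)}^{-1}(P_{FA})$. For unit vectors $\mathbf{t}_1,\mathbf{t}_2\in\mathbb{R}^N$ with $\mathbf{t}_1^T\mathbf{t}_2=0$ (corresponding to the fully-correlated design $\boldsymbol{\Phi}_s=\frac1{\sqrt M}\mathbf{1}_{M_1,1}\otimes\mathbf{t}_1^T$, $\boldsymbol{\Phi}_o=\frac1{\sqrt M}\mathbf{1}_{M_2,1}\otimes\mathbf{t}_2^T$, $M=M_1+M_2$) define $$P_D(\mathbf{t}_1,\mathbf{t}_2)=\mathbb{Q}_{F(N_b,N_b)}\Big(\frac{\sigma_0^2+M_2\sigma_x^2\mathbf{t}_2^T\mathbf{H}\mathbf{H}^T\mathbf{t}_2}{\sigma_0^2+M_1\sigma_x^2\mathbf{t}_1^T\mathbf{H}\mathbf{H}^T\mathbf{t}_1}\gamma\Big).$$ Then $(\mathbf{t}_1,\mathbf{t}_2)=(\mathbf{u}_1,\mathbf{u}_N)$ maximizes $P_D(\mathbf{t}_1,\mathbf{t}_2)$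 over all such pairs.
   Context: $\mathbb{Q}_{F(d_1,d_2)}(x)=\Pr(X>x)$ for $X$ $F$-distributed with $(d_1,d_2)$ degrees of freedom; it is continuous and strictly decreasing on $(0,\infty)$ and $\mathbb{Q}^{-1}_{F(d_1,d_2)}$ is its inverse. $\mathbf{1}_{P,1}$ is the all-ones column vector of length $P$, $\otimes$ the Kronecker product. In the paper, $P_D(\mathbf{t}_1,\mathbf{t}_2)$ is the expression used as the detection probability, at false-alarm probability $P_{FA}$, of the test $\frac{M_1\sum_n|\bar z_s[n]|^2}{M_2\sum_n|\bar z_o[n]|^2}\gtrless\gamma$ (averaged outputs of the two device groups) with this design. *)

theory Defs
  imports "HOL-Analysis.Analysis"
begin

definition F_density :: "nat \<Rightarrow> nat \<Rightarrow> real \<Rightarrow> real" where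
  "F_density d1 d2 x =
     (if x > 0 then
        sqrt ((real d1 * x) ^ d1 * real d2 ^ d2 / (real d1 * x + real d2) ^ (d1 + d2))
        / (x * Beta (real d1 / 2) (real d2 / 2))
      else 0)"

definition F_Q :: "nat \<Rightarrow> nat \<Rightarrow> real \<Rightarrow> real" where
  "F_Q d1 d2 x = (LINT t:{x<..}|lborel. F_density d1 d2 t)"

definition F_Q_inv :: "nat \<Rightarrow> nat \<Rightarrow> real \<Rightarrow> real" where
  "F_Q_inv d1 d2 p = (THE x. x > 0 \<and> F_Q d1 d2 x = p)"

definition P_D :: "real^'k^'n \<Rightarrow> nat \<Rightarrow> nat \<Rightarrow> nat \<Rightarrow> real \<Rightarrow> real \<Rightarrow> real
                    \<Rightarrow> real^'n \<Rightarrow> real^'n \<Rightarrow> real" where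
  "P_D H M1 M2 Nb sx2 s02 PFA t1 t2 =
     F_Q Nb Nb
       ((s02 + real M2 * sx2 * (t2 \<bullet> ((H ** transpose H) *v t2)))
        / (s02 + real M1 * sx2 * (t1 \<bullet> ((H ** transpose H) *v t1)))
        * F_Q_inv Nb Nb PFA)"

end

theory Submission
  imports Defs
begin
lemma expand_onb:
  fixes u :: "nat \<Rightarrow> real^'n" and t :: "real^'n"
  assumes orth: "\<And>i j. i < CARD('n) \<Longrightarrow> j < CARD('n) \<Longrightarrow>
                         u i \<bullet> u j = (if i = j then 1 else 0)"
  shows "t = (\<Sum>i<CARD('n). (t \<bullet> u i) *\<^sub>R u i)"
proof -
  define N where "N = CARD('n)"
  define U where "U = u ` {..<N}"
  have inj: "inj_on u {..<N}"
  proof (rule inj_onI)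
    fix i j assume "i \<in> {..<N}" "j \<in> {..<N}" "u i = u j"
    then show "i = j" using orth[of i j] orth[of i i] unfolding N_def
      by (metis lessThan_iff zero_neq_one)
  qed
  have cardU: "card U = N" unfolding U_def using card_image[OF inj] by simp
  have "pairwise orthogonal U"
    unfolding pairwise_def U_def orthogonal_def N_def using orth by auto
  moreover have "0 \<notin> U"
    unfolding U_def N_def using orth by (auto) (metis inner_zero_left zero_neq_one)
  ultimately have ind: "independent U" by (rule pairwise_orthogonal_independent)
  have "UNIV \<subseteq> span U"
    by (rule card_ge_dim_independent[OF _ ind]) (simp_all add: cardU N_def)
  define x where "x = t - (\<Sum>i<N. (t \<bullet> u i) *\<^sub>R u i)"
  have xo: "orthogonal x y" if "y \<in> U" for y
  proof -
    from that obtain j where j: "j < N" "y = u j" unfolding U_def by auto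
    have "(\<Sum>i<N. (t \<bullet> u i) * (u i \<bullet> u j)) = (\<Sum>i<N. if i = j then t \<bullet> u i else 0)"
      by (rule sum.cong) (use orth j in \<open>auto simp: N_def\<close>)
    also have "\<dots> = t \<bullet> u j" using j by (simp add: sum.delta)
    finally show ?thesis unfolding orthogonal_def x_def j
      by (simp add: inner_diff_left inner_sum_left)
  qed
  have "x \<in> span U" using \<open>UNIV \<subseteq> span U\<close> by auto
  from orthogonal_to_span[OF this xo] have "x = 0" by (simp add: orthogonal_def)
  then show ?thesis unfolding x_def N_def by simp
qed

lemma rayleigh:
  fixes u :: "nat \<Rightarrow> real^'n" and t :: "real^'n" and A :: "real^'n^'n" and l :: "nat \<Rightarrow> real"
  assumes orth: "\<And>i j. i < CARD('n) \<Longrightarrow> j < CARD('n) \<Longrightarrow>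
                         u i \<bullet> u j = (if i = j then 1 else 0)"
    and eig: "\<And>i. i < CARD('n) \<Longrightarrow> A *v u i = l i *s u i"
    and sorted: "\<And>i j. i \<le> j \<Longrightarrow> j < CARD('n) \<Longrightarrow> l j \<le> l i"
    and nt: "norm t = 1"
  shows "l (CARD('n) - 1) \<le> t \<bullet> (A *v t) \<and> t \<bullet> (A *v t) \<le> l 0"
proof -
  define N where "N = CARD('n)"
  define c where "c i = t \<bullet> u i" for i
  have te: "t = (\<Sum>i<N. c i *\<^sub>R u i)" unfolding c_def N_def by (rule expand_onb[OF orth])
  have "t \<bullet> t = 1" using nt by (simp add: power2_norm_eq_inner[symmetric])
  then have s1: "(\<Sum>i<N. (c i)^2) = 1"
    by (subst (asm) (2) te) (simp add: inner_sum_right c_def power2_eq_square)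
  have "A *v t = (\<Sum>i<N. c i *\<^sub>R (A *v u i))"
    by (subst te) (simp add: linear_sum[OF matrix_vector_mul_linear] matrix_vector_mult_scaleR)
  also have "\<dots> = (\<Sum>i<N. (c i * l i) *\<^sub>R u i)"
    by (rule sum.cong) (auto simp: eig N_def scalar_mult_eq_scaleR)
  finally have "t \<bullet> (A *v t) = (\<Sum>i<N. (c i)^2 * l i)"
    by (simp add: inner_sum_right c_def power2_eq_square mult_ac)
  moreover have "(\<Sum>i<N. (c i)^2 * l i) \<le> (\<Sum>i<N. (c i)^2 * l 0)"
    by (rule sum_mono) (auto intro!: mult_left_mono sorted simp: N_def)
  moreover have "(\<Sum>i<N. (c i)^2 * l (N-1)) \<le> (\<Sum>i<N. (c i)^2 * l i)"
    by (rule sum_mono) (auto intro!: mult_left_mono sorted simp: N_def)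
  ultimately show ?thesis using s1 by (simp add: sum_distrib_right[symmetric] N_def)
qed

lemma Beta_pos_real: "a > 0 \<Longrightarrow> b > 0 \<Longrightarrow> Beta a b > (0::real)"
  unfolding Beta_def by simp

lemma F_density_zero: "x \<le> 0 \<Longrightarrow> F_density d1 d2 x = 0"
  by (simp add: F_density_def)

lemma F_density_nonneg: "d > 0 \<Longrightarrow> F_density d d x \<ge> 0"
  using Beta_pos_real[of "real d / 2" "real d / 2"]
  by (auto simp: F_density_def intro!: divide_nonneg_pos)

lemma F_density_meas[measurable]: "F_density d1 d2 \<in> borel_measurable borel"
  unfolding F_density_def by measurable

lemma F_density_eq:
  assumes "x > 0" "d > 0"
  shows "F_density d d x = sqrt (x ^ d / (x + 1) ^ (d + d)) / (x * Beta (real d / 2) (real d / 2))"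
proof -
  have "(real d * x) ^ d * real d ^ d / (real d * x + real d) ^ (d + d)
        = x ^ d / (x + 1) ^ (d + d)"
  proof -
    have "(real d * x + real d) ^ (d + d) = real d ^ (d+d) * (x+1)^(d+d)"
      by (simp add: power_mult_distrib[symmetric] algebra_simps)
    moreover have "(real d * x) ^ d * real d ^ d = real d ^ (d+d) * x ^ d"
      by (simp add: power_mult_distrib power_add)
    ultimately show ?thesis using assms by simp
  qed
  then show ?thesis using assms by (simp add: F_density_def)
qed

lemma q_bounds:
  fixes x :: real assumes "x > 0" "d > 0"
  shows "x ^ d / (x + 1) ^ (d + d) \<le> x" "x ^ d / (x + 1) ^ (d + d) \<le> 1 / x"
proof -
  have p: "(x+1)^(d+d) > 0" using assms by simp
  have "x ^ d = x * x ^ (d-1)" using assms by (cases d) auto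
  also have "\<dots> \<le> x * (x+1)^(d-1)"
    using assms by (intro mult_left_mono power_mono) auto
  also have "\<dots> \<le> x * (x+1)^(d+d)"
    using assms by (intro mult_left_mono power_increasing) auto
  finally show "x ^ d / (x + 1) ^ (d + d) \<le> x" using p by (simp add: divide_le_eq)
  have "x ^ (d+1) \<le> (x+1)^(d+1)" using assms by (intro power_mono) auto
  also have "\<dots> \<le> (x+1)^(d+d)" using assms by (intro power_increasing) auto
  finally have "x * x^d \<le> (x+1)^(d+d)" by simp
  then show "x ^ d / (x + 1) ^ (d + d) \<le> 1 / x" using p assms
    by (simp add: divide_le_eq field_simps)
qed

lemma F_density_bound1:
  assumes "x > 0" "d > 0"
  shows "F_density d d x \<le> (1 / Beta (real d / 2) (real d / 2)) * x powr (-1/2)"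
proof -
  define B where "B = Beta (real d / 2) (real d / 2)"
  have B: "B > 0" unfolding B_def using assms by (intro Beta_pos_real) auto
  have "sqrt (x ^ d / (x + 1) ^ (d + d)) \<le> sqrt x" using q_bounds[OF assms] by simp
  then have "F_density d d x \<le> sqrt x / (x * B)"
    using assms B by (simp add: F_density_eq B_def[symmetric] divide_right_mono)
  also have "sqrt x / (x * B) = (1/B) * x powr (-1/2)"
  proof -
    have h: "x powr (1/2) * x powr (1/2) = x" using assms by (simp add: powr_add[symmetric])
    have "x powr (1/2) > 0" using assms by simp
    then show ?thesis using assms B
      by (simp add: powr_half_sqrt[symmetric] powr_minus field_simps) (metis h mult.assoc)
  qed
  finally show ?thesis unfolding B_def .
qed

lemma F_density_bound2:
  assumes "x > 0" "d > 0"
  shows "F_density d d x \<le> (1 / Beta (real d / 2) (real d / 2)) * x powr (-3/2)"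
proof -
  define B where "B = Beta (real d / 2) (real d / 2)"
  have B: "B > 0" unfolding B_def using assms by (intro Beta_pos_real) auto
  have "sqrt (x ^ d / (x + 1) ^ (d + d)) \<le> sqrt (1/x)" using q_bounds[OF assms] by simp
  then have "F_density d d x \<le> sqrt (1/x) / (x * B)"
    using assms B by (simp add: F_density_eq B_def[symmetric] divide_right_mono)
  also have "sqrt (1/x) / (x * B) = (1/B) * x powr (-3/2)"
  proof -
    have "x powr (-3/2) = x powr (-1) * x powr (-1/2)" by (subst powr_add[symmetric]) simp
    also have "x powr (-1/2) = sqrt (1/x)" using assms
      by (simp add: powr_half_sqrt[symmetric] powr_minus powr_divide inverse_eq_divide)
    also have "x powr (-1) = 1 / x" using assms by (simp add: powr_minus inverse_eq_divide)
    finally have e: "x powr (-3/2) = sqrt (1/x) / x" by simp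
    show ?thesis unfolding e by simp
  qed
  finally show ?thesis unfolding B_def .
qed

lemma F_density_integrable:
  assumes d: "d > 0"
  shows "integrable lborel (F_density d d)"
proof -
  define C where "C = 1 / Beta (real d / 2) (real d / 2)"
  have C: "C > 0" unfolding C_def using d by (simp add: Beta_pos_real)
  have I1: "set_integrable lborel {0..1} (F_density d d)"
    unfolding set_integrable_def
  proof (rule Bochner_Integration.integrable_bound[OF _ _ AE_I2])
    have "(\<lambda>t. t powr (-1/2::real)) integrable_on {0..1}"
      by (rule integrable_on_powr_from_0) auto
    hence "(\<lambda>t. t powr (-1/2::real)) absolutely_integrable_on {0..1}"
      by (subst absolutely_integrable_on_iff_nonneg) auto
    from integrable_mult_right[OF this [unfolded set_integrable_def], of C]
    show "integrable lborel (\<lambda>x. indicat_real {0..1} x *\<^sub>R (C * x powr (-1/2)))"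
      by (subst (asm) integrable_completion) (auto simp: mult_ac)
  next
    fix x :: real
    show "norm (indicator {0..1} x *\<^sub>R F_density d d x) \<le>
            norm (indicator {0..1} x *\<^sub>R (C * x powr (-1/2)))"
      using F_density_bound1[of x d] F_density_nonneg[OF d, of x] F_density_zero[of x d d] d C
      by (cases "x > 0") (auto simp: indicator_def C_def)
  qed (auto intro!: AE_I2 simp: indicator_def)
  have I2: "set_integrable lborel {1..} (F_density d d)"
    unfolding set_integrable_def
  proof (rule Bochner_Integration.integrable_bound[OF _ _ AE_I2])
    have "(\<lambda>t. t powr (-3/2::real)) integrable_on {1..}"
      using has_integral_powr_to_inf[of "-3/2" 1] by (auto simp: integrable_on_def)
    hence "(\<lambda>t. t powr (-3/2::real)) absolutely_integrable_on {1..}"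
      by (subst absolutely_integrable_on_iff_nonneg) auto
    from integrable_mult_right[OF this [unfolded set_integrable_def], of C]
    show "integrable lborel (\<lambda>x. indicat_real {1..} x *\<^sub>R (C * x powr (-3/2)))"
      by (subst (asm) integrable_completion) (auto simp: mult_ac)
  next
    fix x :: real
    show "norm (indicator {1..} x *\<^sub>R F_density d d x) \<le>
            norm (indicator {1..} x *\<^sub>R (C * x powr (-3/2)))"
      using F_density_bound2[of x d] F_density_nonneg[OF d, of x] d C
      by (cases "x \<ge> 1") (auto simp: indicator_def C_def)
  qed (auto intro!: AE_I2 simp: indicator_def)
  have "set_integrable lborel ({0..1} \<union> {1..}) (F_density d d)"
    by (intro set_integrable_Un I1 I2) auto
  also have "{0..1} \<union> {1..} = {0::real..}" by auto
  finally have "integrable lborel (\<lambda>x. indicator {0::real..} x *\<^sub>R F_density d d x)"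
    unfolding set_integrable_def .
  also have "(\<lambda>x. indicator {0::real..} x *\<^sub>R F_density d d x) = F_density d d"
    by (rule ext) (auto simp: indicator_def F_density_zero)
  finally show ?thesis .
qed

lemma F_Q_antimono:
  assumes d: "d > 0" and ab: "a \<le> b"
  shows "F_Q d d b \<le> F_Q d d a"
  unfolding F_Q_def set_lebesgue_integral_def
proof (rule integral_mono)
  show "integrable lborel (\<lambda>x. indicat_real {b<..} x *\<^sub>R F_density d d x)"
    by (rule integrable_mult_indicator) (auto intro: F_density_integrable[OF d])
  show "integrable lborel (\<lambda>x. indicat_real {a<..} x *\<^sub>R F_density d d x)"
    by (rule integrable_mult_indicator) (auto intro: F_density_integrable[OF d])
  fix x show "indicat_real {b<..} x *\<^sub>R F_density d d x \<le> indicat_real {a<..} x *\<^sub>R F_density d d x"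
    using ab F_density_nonneg[OF d, of x] by (auto simp: indicator_def)
qed

lemma F_Q_nonpos:
  assumes "a \<le> 0"
  shows "F_Q d d a = F_Q d d 0"
  unfolding F_Q_def set_lebesgue_integral_def
  by (rule Bochner_Integration.integral_cong) (use assms in \<open>auto simp: indicator_def F_density_zero\<close>)

theorem corollary2:
  fixes H :: "real^'k^'n"
    and u :: "nat \<Rightarrow> real^'n"
    and rho :: "nat \<Rightarrow> real"
    and M1 M2 Nb :: nat
    and sx2 s02 PFA :: real
  assumes NK: "CARD('n) \<ge> CARD('k)"
    and full_rank: "rank H = CARD('k)"
    and orthonormal: "\<And>i j. i < CARD('n) \<Longrightarrow> j < CARD('n) \<Longrightarrow>
                         u i \<bullet> u j = (if i = j then 1 else 0)"
    and eig: "\<And>i. i < CARD('n) \<Longrightarrow> (H ** transpose H) *v u i = (rho i)\<^sup>2 *s u i"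
    and sorted: "\<And>i j. i \<le> j \<Longrightarrow> j < CARD('n) \<Longrightarrow> (rho j)\<^sup>2 \<le> (rho i)\<^sup>2"
    and gap: "(rho 0)\<^sup>2 > (rho (CARD('n) - 1))\<^sup>2"
    and M1: "M1 > 0" and M2: "M2 > 0" and Nb: "Nb > 0"
    and sx2: "sx2 > 0" and s02: "s02 > 0"
    and PFA: "0 < PFA" "PFA < 1"
  shows "\<forall>t1 t2 :: real^'n. norm t1 = 1 \<and> norm t2 = 1 \<and> t1 \<bullet> t2 = 0 \<longrightarrow>
           P_D H M1 M2 Nb sx2 s02 PFA t1 t2
             \<le> P_D H M1 M2 Nb sx2 s02 PFA (u 0) (u (CARD('n) - 1))"
proof (intro allI impI)
  fix t1 t2 :: "real^'n"
  assume t: "norm t1 = 1 \<and> norm t2 = 1 \<and> t1 \<bullet> t2 = 0"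
  define A where "A = H ** transpose H"
  define N where "N = CARD('n)"
  have N: "0 < N" unfolding N_def by simp
  define q where "q v = v \<bullet> (A *v v)" for v
  have R1: "(rho (N-1))\<^sup>2 \<le> q t1 \<and> q t1 \<le> (rho 0)\<^sup>2"
    unfolding q_def A_def N_def
    by (rule rayleigh[where u=u, OF orthonormal eig sorted]) (use t in auto)
  have R2: "(rho (N-1))\<^sup>2 \<le> q t2 \<and> q t2 \<le> (rho 0)\<^sup>2"
    unfolding q_def A_def N_def
    by (rule rayleigh[where u=u, OF orthonormal eig sorted]) (use t in auto)
  have qu0: "q (u 0) = (rho 0)\<^sup>2"
    using eig[of 0] orthonormal[of 0 0] N
    by (simp add: q_def A_def N_def scalar_mult_eq_scaleR)
  have quN: "q (u (N-1)) = (rho (N-1))\<^sup>2"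
    using eig[of "N-1"] orthonormal[of "N-1" "N-1"] N
    by (simp add: q_def A_def N_def scalar_mult_eq_scaleR)
  define g where "g = F_Q_inv Nb Nb PFA"
  define r1 where "r1 = (s02 + real M2 * sx2 * q t2) / (s02 + real M1 * sx2 * q t1)"
  define r2 where "r2 = (s02 + real M2 * sx2 * q (u (N-1))) / (s02 + real M1 * sx2 * q (u 0))"
  have PD1: "P_D H M1 M2 Nb sx2 s02 PFA t1 t2 = F_Q Nb Nb (r1 * g)"
    unfolding P_D_def r1_def g_def q_def A_def ..
  have PD2: "P_D H M1 M2 Nb sx2 s02 PFA (u 0) (u (CARD('n) - 1)) = F_Q Nb Nb (r2 * g)"
    unfolding P_D_def r2_def g_def q_def A_def N_def ..
  have nn: "0 \<le> (rho (N-1))\<^sup>2" by simp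
  have q1: "0 \<le> q t1" using R1 nn by linarith
  have d1: "0 < s02 + real M1 * sx2 * q t1" using q1 s02 sx2
    by (intro add_pos_nonneg) auto
  have d2: "0 < s02 + real M1 * sx2 * q (u 0)" using qu0 s02 sx2
    by (intro add_pos_nonneg) auto
  have n1: "0 \<le> s02 + real M2 * sx2 * q (u (N-1))" using quN s02 sx2 by (intro add_nonneg_nonneg) auto
  have num: "s02 + real M2 * sx2 * q (u (N-1)) \<le> s02 + real M2 * sx2 * q t2"
    using R2 quN sx2 by (auto intro!: mult_left_mono)
  have den: "s02 + real M1 * sx2 * q t1 \<le> s02 + real M1 * sx2 * q (u 0)"
    using R1 qu0 sx2 by (auto intro!: mult_left_mono)
  have "r2 \<le> (s02 + real M2 * sx2 * q t2) / (s02 + real M1 * sx2 * q (u 0))"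
    unfolding r2_def using num d2 by (intro divide_right_mono) auto
  also have "\<dots> \<le> r1" unfolding r1_def
    by (rule divide_left_mono[OF den]) (use num n1 d1 in linarith, use d1 d2 in simp)
  finally have r: "r2 \<le> r1" .
  have r2p: "0 \<le> r2" unfolding r2_def using n1 d2 by simp
  show "P_D H M1 M2 Nb sx2 s02 PFA t1 t2
          \<le> P_D H M1 M2 Nb sx2 s02 PFA (u 0) (u (CARD('n) - 1))"
    unfolding PD1 PD2
  proof (cases "g > 0")
    case True
    then show "F_Q Nb Nb (r1 * g) \<le> F_Q Nb Nb (r2 * g)"
      using r by (intro F_Q_antimono Nb mult_right_mono) auto
  next
    case False
    then have g0: "g \<le> 0" by simp
    have r1p: "0 \<le> r1" using r r2p by linarith
    have a: "r1 * g \<le> 0" using r1p g0 by (rule mult_nonneg_nonpos)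
    have b: "r2 * g \<le> 0" using r2p g0 by (rule mult_nonneg_nonpos)
    show "F_Q Nb Nb (r1 * g) \<le> F_Q Nb Nb (r2 * g)"
      using F_Q_nonpos[OF a, of Nb] F_Q_nonpos[OF b, of Nb] by linarith
  qed
qed

end
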